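(* Let $T$ be a finite tree with labels in $\{a,\varepsilon\}$ in which every node has at most $2$ children and every leaf and every node with $2$ children is labelled $\varepsilon$. If $T$ contains $n\ge 1$ nodes labelled $a$, then $\mathrm{score}(T)\ge \log_2 n$.
   Context: The score of such a tree is defined recursively: if $T$ is a single leaf (labelled $\varepsilon$), $\mathrm{score}(T)=0$; if the root of $T$ has label $\gamma$ and exactly one child subtree $T_1$, then $\mathrm{score}(T)=\mathrm{score}(T_1)+\iota(\gamma)$ where $\iota(a)=1$, $\iota(\varepsilon)=0$; if the root (labelled $\varepsilon$) has child subtrees $T_1,\dots,T_k$ with $k\ge2$, then $\mathrm{score}(T)=\max_{1\le i\le k}\big(\mathrm{score}(T_i)+\iota\big(\sum_{j\ne i}\mathrm{score}(T_j)\big)\big)$, where for a natural number $x$, $\iota(x)=0$ if $x=0$ and $\iota(x)=1$ if $x>0$. *)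

theory Defs
  imports Complex_Main
begin

datatype lab = A | Eps

datatype tree = Node lab "tree list"

definition iota_nat :: "nat \<Rightarrow> nat" where
  "iota_nat x = (if x = 0 then 0 else 1)"

definition iota_lab :: "lab \<Rightarrow> nat" where
  "iota_lab l = (if l = A then 1 else 0)"

definition combine :: "nat list \<Rightarrow> nat" where
  "combine ss = Max {ss ! i + iota_nat (\<Sum>j\<in>{..<length ss} - {i}. ss ! j) | i. i < length ss}"

fun score :: "tree \<Rightarrow> nat" where
  "score (Node l ts) =
     (case map score ts of
        [] \<Rightarrow> 0
      | [s] \<Rightarrow> s + iota_lab l
      | ss \<Rightarrow> combine ss)"

fun wf_tree :: "tree \<Rightarrow> bool" where
  "wf_tree (Node l ts) =
     (length ts \<le> 2 \<and> ((ts = [] \<or> length ts = 2) \<longrightarrow> l = Eps) \<and> (\<forall>t\<in>set ts. wf_tree t))"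

fun count_a :: "tree \<Rightarrow> nat" where
  "count_a (Node l ts) = iota_lab l + sum_list (map count_a ts)"

end

theory Submission
  imports Defs
begin

lemma combine2: "combine [x, y] = max (x + iota_nat y) (y + iota_nat x)"
proof -
  have "{[x,y] ! i + iota_nat (\<Sum>j\<in>{..<length [x,y]} - {i}. [x,y] ! j) | i. i < length [x,y]}
        = {x + iota_nat y, y + iota_nat x}"
  proof -
    have a: "{..<Suc (Suc 0)} - {0} = {Suc 0}" by auto
    have b: "{..<Suc (Suc 0)} - {Suc 0} = {0}" by auto
    have e0: "[x,y] ! 0 + iota_nat (sum ((!) [x, y]) ({..<Suc (Suc 0)} - {0})) = x + iota_nat y"
      by (simp add: a)
    have e1: "[x,y] ! Suc 0 + iota_nat (sum ((!) [x, y]) ({..<Suc (Suc 0)} - {Suc 0})) = y + iota_nat x"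
      by (simp add: b)
    show ?thesis
      apply (rule set_eqI)
      apply (simp only: mem_Collect_eq insert_iff empty_iff length_Cons list.size numeral_2_eq_2)
      apply (safe)
      using less_2_cases e0 e1 numeral_2_eq_2 apply metis
      using e0 apply (metis zero_less_Suc)
      using e1 apply (metis lessI)
      done
  qed
  then show ?thesis by (simp add: combine_def)
qed

lemma key: "wf_tree T \<Longrightarrow> count_a T + 1 \<le> 2 ^ score T"
proof (induction T rule: score.induct)
  case (1 l ts)
  show ?case
  proof (cases ts)
    case Nil
    then show ?thesis using 1 by (simp add: iota_lab_def)
  next
    case (Cons t rest)
    note C = Cons
    show ?thesis
    proof (cases rest)
      case Nil
      have ih: "count_a t + 1 \<le> 2 ^ score t" using 1 C Nil by auto
      have "(2::nat) ^ score t \<le> 2 ^ (score t + 1) - 1" by simp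
      then show ?thesis using ih C Nil
        by (cases l) (auto simp: iota_lab_def)
    next
      case (Cons u rest2)
      then have r2: "rest2 = []" using 1 C by auto
      have ih1: "count_a t + 1 \<le> 2 ^ score t" and ih2: "count_a u + 1 \<le> 2 ^ score u"
        using 1 C Cons r2 by auto
      have l: "l = Eps" using 1 C Cons r2 by auto
      have sc: "score (Node l ts) = max (score t + iota_nat (score u)) (score u + iota_nat (score t))"
        using C Cons r2 by (simp add: combine2)
      have cnt: "count_a (Node l ts) = count_a t + count_a u" using C Cons r2 l by (simp add: iota_lab_def)
      have gen: "c1 + 1 \<le> 2 ^ s1 \<Longrightarrow> c2 + 1 \<le> 2 ^ s2 \<Longrightarrow> s2 \<le> s1 \<Longrightarrow>
            c1 + c2 + 1 \<le> (2::nat) ^ max (s1 + iota_nat s2) (s2 + iota_nat s1)" for c1 c2 s1 s2 :: nat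
      proof (cases "s2 = 0")
        case True
        assume "c1 + 1 \<le> 2 ^ s1" "c2 + 1 \<le> 2 ^ s2"
        moreover have "(2::nat) ^ s1 \<le> 2 ^ max (s1 + iota_nat s2) (s2 + iota_nat s1)"
          by (rule power_increasing) auto
        moreover have "c2 = 0" using calculation True by simp
        ultimately show ?thesis by linarith
      next
        case False
        assume h: "c1 + 1 \<le> 2 ^ s1" "c2 + 1 \<le> 2 ^ s2" "s2 \<le> s1"
        have p1: "(2::nat) ^ s2 \<le> 2 ^ s1" by (rule power_increasing) (use h in auto)
        have p2: "(2::nat) ^ (s1+1) \<le> 2 ^ max (s1 + iota_nat s2) (s2 + iota_nat s1)"
          by (rule power_increasing) (use False in \<open>auto simp: iota_nat_def\<close>)
        have p3: "(2::nat) ^ (s1+1) = 2 * 2 ^ s1" by simp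
        show ?thesis using h p1 p2 p3 by linarith
      qed
      show ?thesis
      proof (cases "score u \<le> score t")
        case True
        then show ?thesis using gen[OF ih1 ih2] sc cnt by simp
      next
        case False
        then show ?thesis using gen[OF ih2 ih1] sc cnt by (simp add: max.commute add.commute)
      qed
    qed
  qed
qed

theorem mainTheorem6:
  fixes T :: tree and n :: nat
  assumes "wf_tree T" and "count_a T = n" and "n \<ge> 1"
  shows "real (score T) \<ge> log 2 (real n)"
proof -
  have "n < 2 ^ score T" using key[OF assms(1)] assms(2) by simp
  then have "real n < 2 powr real (score T)"
    by (metis of_nat_less_iff of_nat_numeral of_nat_power powr_realpow zero_less_numeral)
  then have "log 2 (real n) < real (score T)"
    using assms(3) by (simp add: log_less_iff)
  then show ?thesis by simp
qed

end
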